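(* Consider ballistic deposition started from the empty configuration. There is a constant $\kappa>0$ such that for all $N$, all integers $H>2$ and every site $i\in G_N$, $$P\big(\sigma_i(N)>H\big)\le e^{-\kappa H}.$$
   Context: Ballistic deposition: for $N\ge2$, $G_N=\{1,\dots,N\}$, a configuration $\sigma\in\mathbb N^N$ gives column heights. Given $\sigma$, an explorer is a walk $(X_n,Z_n)_{n\ge0}$ with $(X_n)$ i.i.d. uniform on $G_N$, $Z_0=\max_i\sigma_i+1$ and $Z_{n+1}=Z_n-1$. With $n^*=\inf\{n:Z_n\le\sigma_{X_n}\}$, the configuration becomes $\sigma+e_{X_{n^*}}$. Explorers are sent successively and independently; $\sigma(t)$ is the configuration after $t$ explorers, $\sigma(0)=(0,\dots,0)$. *)

theory Defs
  imports "HOL-Probability.Probability"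
begin

text \<open>Ballistic deposition on G_N = {1..N}. A configuration is a function
  sigma :: nat => nat (only the values on {1..N} matter; others stay 0).\<close>

text \<open>Landing column of an explorer currently at height z above configuration sigma:
  a uniform column x is drawn; if z <= sigma x the explorer stops at x,
  otherwise it descends to height z - 1 and draws a fresh column.
  At height 0 it always stops, since sigma x >= 0.\<close>
fun bd_land :: "nat \<Rightarrow> (nat \<Rightarrow> nat) \<Rightarrow> nat \<Rightarrow> nat pmf" where
  "bd_land N \<sigma> 0 = pmf_of_set {1..N}"
| "bd_land N \<sigma> (Suc z) =
     pmf_of_set {1..N} \<bind> (\<lambda>x. if Suc z \<le> \<sigma> x then return_pmf x else bd_land N \<sigma> z)"

definition bd_step :: "nat \<Rightarrow> (nat \<Rightarrow> nat) \<Rightarrow> (nat \<Rightarrow> nat) pmf" where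
  "bd_step N \<sigma> = map_pmf (\<lambda>x. \<sigma>(x := Suc (\<sigma> x))) (bd_land N \<sigma> (Max (\<sigma> ` {1..N}) + 1))"

fun bd_config :: "nat \<Rightarrow> nat \<Rightarrow> (nat \<Rightarrow> nat) pmf" where
  "bd_config N 0 = return_pmf (\<lambda>_. 0)"
| "bd_config N (Suc t) = bd_config N t \<bind> bd_step N"

end

theory Submission
  imports Defs
begin

lemma land_step_bound:
  assumes N: "N \<ge> 1"
  shows "pmf (bd_land N \<sigma> (Suc z)) i \<le> (if Suc z \<le> \<sigma> i then 1 else 0) / real N + pmf (bd_land N \<sigma> z) i"
proof -
  let ?p = "pmf (bd_land N \<sigma> z) i"
  let ?c = "if Suc z \<le> \<sigma> i then 1 else 0 :: real"
  have fin: "finite {1..N}" and ne: "{1..N} \<noteq> {}" using N by auto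
  have "pmf (bd_land N \<sigma> (Suc z)) i =
      (\<Sum>x\<in>{1..N}. pmf (if Suc z \<le> \<sigma> x then return_pmf x else bd_land N \<sigma> z) i) / real (card {1..N})"
    by (simp only: bd_land.simps pmf_bind integral_pmf_of_set[OF ne fin])
  also have "\<dots> \<le> (\<Sum>x\<in>{1..N}. (if x = i then ?c else 0) + ?p) / real N"
    using N apply (simp only: card_atLeastAtMost diff_Suc_1 add_0)
    apply (intro divide_right_mono sum_mono)
    by (auto simp: pmf_return indicator_def)
  also have "\<dots> = ((\<Sum>x\<in>{1..N}. (if x = i then ?c else 0)) + real N * ?p) / real N"
    by (simp add: sum.distrib)
  also have "(\<Sum>x\<in>{1..N}. (if x = i then ?c else 0)) \<le> ?c"
    by (simp add: sum.delta)
  hence "((\<Sum>x\<in>{1..N}. (if x = i then ?c else 0)) + real N * ?p) / real N \<le> (?c + real N * ?p) / real N"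
    by (intro divide_right_mono) auto
  also have "\<dots> = ?c / real N + ?p" using N by (simp add: field_simps)
  finally show ?thesis .
qed

lemma land_bound:
  assumes N: "N \<ge> 1"
  shows "pmf (bd_land N \<sigma> z) i \<le> (real (min z (\<sigma> i)) + 1) / real N"
proof (induction z)
  case 0
  show ?case using N by (simp add: pmf_of_set indicator_def)
next
  case (Suc z)
  have "pmf (bd_land N \<sigma> (Suc z)) i \<le> (if Suc z \<le> \<sigma> i then 1 else 0) / real N + (real (min z (\<sigma> i)) + 1) / real N"
    using land_step_bound[OF N, of \<sigma> z i] Suc by linarith
  also have "\<dots> \<le> (real (min (Suc z) (\<sigma> i)) + 1) / real N"
    using N by (auto simp: field_simps min_def)
  finally show ?case .
qed

lemma step_nn:
  assumes N: "N \<ge> 1" and b: "b \<ge> (1::real)"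
  shows "(\<integral>\<^sup>+\<tau>. ennreal (b ^ (\<tau> i)) \<partial>bd_step N \<sigma>)
     \<le> ennreal (b ^ (\<sigma> i) * (1 + (b - 1) * (real (\<sigma> i) + 1) / real N))"
proof -
  let ?M = "bd_land N \<sigma> (Max (\<sigma> ` {1..N}) + 1)"
  have eq: "ennreal (b ^ ((\<sigma>(x := Suc (\<sigma> x))) i)) =
      ennreal (b ^ (\<sigma> i)) + ennreal (b ^ (\<sigma> i) * (b - 1)) * indicator {i} x" for x
    using b by (cases "x = i") (auto simp: indicator_def ennreal_plus[symmetric] algebra_simps simp del: ennreal_plus)
  have "(\<integral>\<^sup>+\<tau>. ennreal (b ^ (\<tau> i)) \<partial>bd_step N \<sigma>)
      = (\<integral>\<^sup>+x. ennreal (b ^ (\<sigma> i)) + ennreal (b ^ (\<sigma> i) * (b - 1)) * indicator {i} x \<partial>?M)"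
    unfolding bd_step_def nn_integral_map_pmf eq ..
  also have "\<dots> = ennreal (b ^ (\<sigma> i)) + ennreal (b ^ (\<sigma> i) * (b - 1)) * ennreal (pmf ?M i)"
    by (simp add: nn_integral_add nn_integral_cmult_indicator emeasure_pmf_single measure_pmf.emeasure_space_1 del: bd_land.simps)
  also have "\<dots> = ennreal (b ^ (\<sigma> i) + b ^ (\<sigma> i) * (b - 1) * pmf ?M i)"
    using b by (simp add: ennreal_plus[symmetric] ennreal_mult[symmetric] del: ennreal_plus)
  also have "\<dots> \<le> ennreal (b ^ (\<sigma> i) * (1 + (b - 1) * (real (\<sigma> i) + 1) / real N))"
  proof (rule ennreal_leI)
    have "pmf ?M i \<le> (real (\<sigma> i) + 1) / real N"
      by (rule order.trans[OF land_bound[OF N, of \<sigma> "Max (\<sigma> ` {1..N}) + 1" i]])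
        (auto intro!: divide_right_mono)
    hence "b ^ (\<sigma> i) * (b - 1) * pmf ?M i \<le> b ^ (\<sigma> i) * (b - 1) * ((real (\<sigma> i) + 1) / real N)"
      using b by (intro mult_left_mono) auto
    moreover have "b ^ (\<sigma> i) * (1 + (b - 1) * (real (\<sigma> i) + 1) / real N)
        = b ^ (\<sigma> i) + b ^ (\<sigma> i) * (b - 1) * ((real (\<sigma> i) + 1) / real N)"
      by (simp add: field_simps)
    ultimately show "b ^ (\<sigma> i) + b ^ (\<sigma> i) * (b - 1) * pmf ?M i \<le> b ^ (\<sigma> i) * (1 + (b - 1) * (real (\<sigma> i) + 1) / real N)"
      by linarith
  qed
  finally show ?thesis .
qed

lemma real_step:
  assumes N: "N \<ge> (1::nat)" and u: "u \<ge> (0::real)" "u * (1 + 1 / real N) < 1"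
  shows "(1 / (1 - u)) * (1 + (1 / (1 - u) - 1) / real N) \<le> 1 / (1 - u * (1 + 1 / real N))"
proof -
  have u1: "u < 1" using u N by (smt (verit) divide_nonneg_nonneg mult_less_cancel_left2 of_nat_0_le_iff)
  have Np: "real N > 0" using N by simp
  have A: "(N * (1 - u) + u) * (1 - u - u / N) = N * (1 - u)^2 - u^2 / N"
    using Np by (simp add: field_simps power2_eq_square)
  have lhs: "(1 / (1 - u)) * (1 + (1 / (1 - u) - 1) / real N) = (N * (1 - u) + u) / (N * (1 - u)^2)"
    using u1 Np by (simp add: field_simps power2_eq_square)
  have d: "1 - u * (1 + 1 / real N) = 1 - u - u / N" by (simp add: algebra_simps)
  have pos: "1 - u - u / N > 0" using u d by linarith
  have "(N * (1 - u) + u) / (N * (1 - u)^2) \<le> 1 / (1 - u - u / N)"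
  proof -
    have "(N * (1 - u) + u) * (1 - u - u / N) \<le> N * (1 - u)^2" using A by simp
    thus ?thesis using pos u1 Np by (simp add: field_simps)
  qed
  thus ?thesis unfolding lhs d .
qed

definition Lam :: "nat \<Rightarrow> real \<Rightarrow> nat \<Rightarrow> real" where
  "Lam N w k = 1 / (1 - w * (1 + 1 / real N) ^ k)"

lemma Lam_ge1:
  assumes N: "N \<ge> 1" and w: "w \<ge> 0" "w * (1 + 1 / real N) ^ N < 1" and k: "k \<le> N"
  shows "Lam N w k \<ge> 1"
proof -
  have "(1 + 1 / real N) ^ k \<le> (1 + 1 / real N) ^ N"
    using k by (intro power_increasing) auto
  hence "w * (1 + 1 / real N) ^ k \<le> w * (1 + 1 / real N) ^ N" using w by (intro mult_left_mono) auto
  moreover have "0 \<le> w * (1 + 1 / real N) ^ k" using w by simp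
  ultimately show ?thesis using w unfolding Lam_def by (simp add: field_simps)
qed

lemma Lam_step:
  assumes N: "N \<ge> 1" and w: "w \<ge> 0" "w * (1 + 1 / real N) ^ N < 1" and k: "Suc k \<le> N"
  shows "Lam N w k * (1 + (Lam N w k - 1) / real N) \<le> Lam N w (Suc k)"
proof -
  let ?u = "w * (1 + 1 / real N) ^ k"
  have "(1 + 1 / real N) ^ Suc k \<le> (1 + 1 / real N) ^ N"
    using k by (intro power_increasing) auto
  hence "w * (1 + 1 / real N) ^ Suc k \<le> w * (1 + 1 / real N) ^ N" using w by (intro mult_left_mono) auto
  hence "?u * (1 + 1 / real N) < 1" using w by (simp add: algebra_simps)
  from real_step[OF N _ this] w
  have "(1 / (1 - ?u)) * (1 + (1 / (1 - ?u) - 1) / real N) \<le> 1 / (1 - ?u * (1 + 1 / real N))" by simp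
  thus ?thesis unfolding Lam_def by (simp add: algebra_simps)
qed

lemma pointwise:
  assumes N: "N \<ge> 1" and b: "b \<ge> (1::real)" and c: "b * (1 + (b - 1) / real N) \<le> c"
  shows "b ^ s * (1 + (b - 1) * (real s + 1) / real N) \<le> (1 + (b - 1) / real N) * c ^ s"
proof -
  let ?y = "(b - 1) / real N"
  have y: "?y \<ge> 0" using b by simp
  have "1 + real (Suc s) * ?y \<le> (1 + ?y) ^ Suc s"
    by (rule Bernoulli_inequality) (use y in linarith)
  hence "1 + (b - 1) * (real s + 1) / real N \<le> (1 + ?y) ^ Suc s" by (simp add: algebra_simps)
  hence "b ^ s * (1 + (b - 1) * (real s + 1) / real N) \<le> b ^ s * (1 + ?y) ^ Suc s"
    using b by (intro mult_left_mono) auto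
  also have "\<dots> = (1 + ?y) * (b * (1 + ?y)) ^ s" by (simp add: power_mult_distrib)
  also have "\<dots> \<le> (1 + ?y) * c ^ s"
    using c b y by (intro mult_left_mono power_mono) auto
  finally show ?thesis .
qed

lemma config_bound:
  assumes N: "N \<ge> 1" and w: "w \<ge> 0" "w * (1 + 1 / real N) ^ N < 1"
  shows "t \<le> N \<Longrightarrow> (\<integral>\<^sup>+\<sigma>. ennreal (Lam N w (N - t) ^ (\<sigma> i)) \<partial>bd_config N t)
           \<le> ennreal (Lam N w N / Lam N w (N - t))"
proof (induction t)
  case 0
  have "Lam N w N \<ge> 1" using Lam_ge1[OF N w] by simp
  thus ?case by simp
next
  case (Suc t)
  define k where "k = N - Suc t"
  have tk: "N - t = Suc k" using Suc.prems unfolding k_def by simp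
  have kN: "Suc k \<le> N" using Suc.prems unfolding k_def by simp
  define b where "b = Lam N w k"
  define c where "c = Lam N w (Suc k)"
  have b1: "b \<ge> 1" unfolding b_def using Lam_ge1[OF N w] kN by simp
  have c1: "c \<ge> 1" unfolding c_def using Lam_ge1[OF N w kN] .
  have bc: "b * (1 + (b - 1) / real N) \<le> c" unfolding b_def c_def using Lam_step[OF N w kN] .
  have LN: "Lam N w N \<ge> 1" using Lam_ge1[OF N w] by simp
  have "(\<integral>\<^sup>+\<sigma>. ennreal (Lam N w (N - Suc t) ^ (\<sigma> i)) \<partial>bd_config N (Suc t))
      = (\<integral>\<^sup>+\<sigma>. (\<integral>\<^sup>+\<tau>. ennreal (b ^ (\<tau> i)) \<partial>bd_step N \<sigma>) \<partial>bd_config N t)"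
    by (simp add: nn_integral_bind_pmf b_def k_def)
  also have "\<dots> \<le> (\<integral>\<^sup>+\<sigma>. ennreal (1 + (b - 1) / real N) * ennreal (c ^ (\<sigma> i)) \<partial>bd_config N t)"
  proof (rule nn_integral_mono)
    fix \<sigma> :: "nat \<Rightarrow> nat"
    have "(\<integral>\<^sup>+\<tau>. ennreal (b ^ (\<tau> i)) \<partial>bd_step N \<sigma>)
        \<le> ennreal (b ^ (\<sigma> i) * (1 + (b - 1) * (real (\<sigma> i) + 1) / real N))"
      by (rule step_nn[OF N b1])
    also have "\<dots> \<le> ennreal ((1 + (b - 1) / real N) * c ^ (\<sigma> i))"
      by (rule ennreal_leI, rule pointwise[OF N b1 bc])
    also have "\<dots> = ennreal (1 + (b - 1) / real N) * ennreal (c ^ (\<sigma> i))"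
      using b1 c1 by (simp add: ennreal_mult)
    finally show "(\<integral>\<^sup>+\<tau>. ennreal (b ^ (\<tau> i)) \<partial>bd_step N \<sigma>)
        \<le> ennreal (1 + (b - 1) / real N) * ennreal (c ^ (\<sigma> i))" .
  qed
  also have "\<dots> = ennreal (1 + (b - 1) / real N) * (\<integral>\<^sup>+\<sigma>. ennreal (c ^ (\<sigma> i)) \<partial>bd_config N t)"
    by (rule nn_integral_cmult) simp
  also have "\<dots> \<le> ennreal (1 + (b - 1) / real N) * ennreal (Lam N w N / c)"
    using Suc.IH Suc.prems unfolding c_def tk by (intro mult_left_mono) auto
  also have "\<dots> = ennreal ((1 + (b - 1) / real N) * (Lam N w N / c))"
    using b1 c1 LN by (intro ennreal_mult[symmetric]) auto
  also have "\<dots> \<le> ennreal (Lam N w N / b)"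
  proof (rule ennreal_leI)
    have "(1 + (b - 1) / real N) / c \<le> 1 / b"
      using bc b1 c1 by (simp add: field_simps)
    hence "(1 + (b - 1) / real N) / c * Lam N w N \<le> 1 / b * Lam N w N"
      using LN by (intro mult_right_mono) auto
    thus "(1 + (b - 1) / real N) * (Lam N w N / c) \<le> Lam N w N / b" by simp
  qed
  finally show ?case unfolding b_def k_def .
qed

lemma rho_bound: "N \<ge> 1 \<Longrightarrow> (1 + 1 / real N) ^ N \<le> 3"
proof -
  assume N: "N \<ge> 1"
  have "(1 + 1 / real N) ^ N \<le> exp (1 / real N) ^ N"
    by (intro power_mono) (auto simp: exp_ge_add_one_self add.commute)
  also have "\<dots> = exp (real N * (1 / real N))" by (simp only: exp_of_nat_mult)
  also have "\<dots> = exp 1" using N by simp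
  also have "\<dots> \<le> 3" by (rule exp_le)
  finally show ?thesis .
qed

theorem proposition6p1:
  shows "\<exists>\<kappa>::real. \<kappa> > 0 \<and>
    (\<forall>N::nat. N \<ge> 2 \<longrightarrow> (\<forall>H::nat. H > 2 \<longrightarrow> (\<forall>i\<in>{1..N}.
       measure_pmf.prob (bd_config N N) {\<sigma>. \<sigma> i > H} \<le> exp (- \<kappa> * real H))))"
proof (intro exI[of _ "ln (20/19)"] conjI allI impI ballI)
  show "ln (20/19::real) > 0" by simp
  fix N H i assume N2: "N \<ge> (2::nat)" and H: "H > (2::nat)" and i: "i \<in> {1..N}"
  have N: "N \<ge> 1" using N2 by simp
  define w :: real where "w = 1/9"
  have w0: "w \<ge> 0" unfolding w_def by simp
  have rho: "(1 + 1 / real N) ^ N \<le> 3" by (rule rho_bound[OF N])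
  have wr: "w * (1 + 1 / real N) ^ N \<le> 1/3" using rho unfolding w_def by simp
  hence w1: "w * (1 + 1 / real N) ^ N < 1" by simp
  define a where "a = Lam N w 0"
  have a: "a = 9/8" unfolding a_def Lam_def w_def by simp
  have LN: "Lam N w N \<le> 3/2"
  proof -
    have "0 \<le> w * (1 + 1 / real N) ^ N" using w0 by simp
    thus ?thesis using wr unfolding Lam_def by (simp add: field_simps)
  qed
  have LN1: "Lam N w N \<ge> 1" using Lam_ge1[OF N w0 w1] by simp
  have int: "(\<integral>\<^sup>+\<sigma>. ennreal (a ^ (\<sigma> i)) \<partial>bd_config N N) \<le> ennreal (Lam N w N / a)"
    using config_bound[OF N w0 w1, of N i] unfolding a_def by simp
  have "emeasure (measure_pmf (bd_config N N)) {\<sigma>. \<sigma> i > H}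
      = (\<integral>\<^sup>+\<sigma>. indicator {\<sigma>. \<sigma> i > H} \<sigma> \<partial>bd_config N N)"
    by simp
  also have "\<dots> \<le> (\<integral>\<^sup>+\<sigma>. ennreal (a ^ (\<sigma> i)) * ennreal (1 / a ^ (H + 1)) \<partial>bd_config N N)"
  proof (rule nn_integral_mono)
    fix \<sigma> :: "nat \<Rightarrow> nat"
    show "indicator {\<sigma>. \<sigma> i > H} \<sigma> \<le> ennreal (a ^ (\<sigma> i)) * ennreal (1 / a ^ (H + 1))"
    proof (cases "\<sigma> i > H")
      case True
      have "a ^ (H + 1) \<le> a ^ (\<sigma> i)" unfolding a by (rule power_increasing) (use True in auto)
      moreover have "a ^ (H + 1) > 0" unfolding a by simp
      ultimately have "1 \<le> a ^ (\<sigma> i) / a ^ (H + 1)" by (simp add: le_divide_eq)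
      hence "1 \<le> a ^ (\<sigma> i) * (1 / a ^ (H + 1))" by simp
      hence "ennreal 1 \<le> ennreal (a ^ (\<sigma> i) * (1 / a ^ (H + 1)))" by (rule ennreal_leI)
      also have "ennreal (a ^ (\<sigma> i) * (1 / a ^ (H + 1))) = ennreal (a ^ (\<sigma> i)) * ennreal (1 / a ^ (H + 1))"
        unfolding a by (rule ennreal_mult) auto
      finally show ?thesis using True by simp
    qed simp
  qed
  also have "\<dots> = (\<integral>\<^sup>+\<sigma>. ennreal (a ^ (\<sigma> i)) \<partial>bd_config N N) * ennreal (1 / a ^ (H + 1))"
    by (rule nn_integral_multc) simp
  also have "\<dots> \<le> ennreal (Lam N w N / a) * ennreal (1 / a ^ (H + 1))"
    using int by (intro mult_right_mono) auto
  also have "\<dots> = ennreal (Lam N w N / a * (1 / a ^ (H + 1)))"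
    using LN1 unfolding a by (intro ennreal_mult[symmetric]) auto
  finally have E: "emeasure (measure_pmf (bd_config N N)) {\<sigma>. \<sigma> i > H} \<le> ennreal (Lam N w N / a * (1 / a ^ (H + 1)))" .
  have nn: "0 \<le> Lam N w N / a * (1 / a ^ (H + 1))" using LN1 unfolding a by simp
  have P: "measure_pmf.prob (bd_config N N) {\<sigma>. \<sigma> i > H} \<le> Lam N w N / a * (1 / a ^ (H + 1))"
    using E nn by (simp only: measure_pmf.emeasure_eq_measure ennreal_le_iff)
  have "Lam N w N / a * (1 / a ^ (H + 1)) = Lam N w N * (8/9) ^ (H + 2)"
    unfolding a by (simp add: power_divide field_simps)
  also have "\<dots> \<le> 3/2 * (8/9) ^ (H + 2)"
    using LN by (intro mult_right_mono) auto
  also have "\<dots> = (32/27) * (8/9) ^ H" by (simp add: power_add)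
  also have "\<dots> \<le> (19/20) ^ H"
  proof -
    have "(171/160::real) ^ 3 \<le> (171/160) ^ H" using H by (intro power_increasing) auto
    hence "32/27 \<le> (171/160::real) ^ H" by (simp add: power3_eq_cube) 
    hence "32/27 * (8/9::real) ^ H \<le> (171/160) ^ H * (8/9) ^ H" by (intro mult_right_mono) auto
    also have "\<dots> = (19/20) ^ H" by (simp add: power_mult_distrib[symmetric])
    finally show ?thesis .
  qed
  also have "\<dots> = exp (- ln (20/19) * real H)"
  proof -
    have "exp (- ln (20/19::real) * real H) = exp (- ln (20/19::real)) ^ H"
      by (simp add: exp_of_nat_mult[symmetric] mult.commute)
    also have "exp (- ln (20/19::real)) = 19/20" by (simp add: exp_minus)
    finally show ?thesis by simp
  qed
  finally show "measure_pmf.prob (bd_config N N) {\<sigma>. \<sigma> i > H} \<le> exp (- ln (20/19) * real H)"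
    using P by linarith
qed

end
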